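(* Assume $n\ge2$ and $F_\infty\ne0$. Then $F$ has exactly $n-1$ zeros, located as follows. - Exactly $n-2$ of them lie strictly between consecutive singularities of $F$ (the zeros of $g$), one in each such open interval. - The remaining zero lies to the left of the smallest zero of $g$ if $F_\infty>0$, and to the right of the largest zero of $g$ if $F_\infty<0$.
   Context: Data: an integer $N\ge 2$, reals $x_A<x_B$, $R=x_B-x_A$, and bins $i=1,\dots,N$ with widths $\Delta x_i>0$ and centers $x_i$ that tile $[x_A,x_B]$ contiguously in increasing order, so that $x_1-x_A=\Delta x_1/2$, $x_N-x_A=R-\Delta x_N/2$ and $0<x_1-x_A<\dots<x_N-x_A<R$. The counts are $y_i\in\{0,1,2,\dots\}$, $M=\sum_i y_i$, and $n$ is the number of indices with $y_i\ge1$. Write $d_i=x_i-x_A$. Define $$g(a)=\sum_{i=1}^N y_i\frac{d_i}{1+a d_i}$$ for $a\notin\{-1/d_i: y_i\ge 1\}$; these excluded points are the poles of $g$. Define $$F(a)=1+\frac R2\Big(a-\frac{M}{g(a)}\Big)$$ wherever $g(a)$ is finite and nonzero. At poles of $g$, $F$ is extended by continuity as $F(a)=1+aR/2$. The zeros of $g$ are the singularities of $F$. Finally, $$F_\infty=1-\frac{R}{2M}\sum_i \frac{y_i}{d_i}.$$ *)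

theory Defs
  imports Complex_Main
begin

text \<open>Bins are indexed by 1..N; d i = x_i - x_A is the offset of the i-th bin centre.\<close>

definition Mtot :: "nat \<Rightarrow> (nat \<Rightarrow> nat) \<Rightarrow> real" where
  "Mtot N y = (\<Sum>i=1..N. real (y i))"

definition ncount :: "nat \<Rightarrow> (nat \<Rightarrow> nat) \<Rightarrow> nat" where
  "ncount N y = card {i\<in>{1..N}. y i \<ge> 1}"

text \<open>g(a); only meaningful away from its poles.\<close>
definition gfun :: "nat \<Rightarrow> (nat \<Rightarrow> real) \<Rightarrow> (nat \<Rightarrow> nat) \<Rightarrow> real \<Rightarrow> real" where
  "gfun N d y a = (\<Sum>i=1..N. real (y i) * d i / (1 + a * d i))"

definition is_pole :: "nat \<Rightarrow> (nat \<Rightarrow> real) \<Rightarrow> (nat \<Rightarrow> nat) \<Rightarrow> real \<Rightarrow> bool" where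
  "is_pole N d y a \<longleftrightarrow> (\<exists>i\<in>{1..N}. y i \<ge> 1 \<and> a = - 1 / d i)"

text \<open>F(a), extended by continuity at the poles of g as 1 + aR/2.\<close>
definition Ffun :: "real \<Rightarrow> nat \<Rightarrow> (nat \<Rightarrow> real) \<Rightarrow> (nat \<Rightarrow> nat) \<Rightarrow> real \<Rightarrow> real" where
  "Ffun R N d y a = (if is_pole N d y a then 1 + a * R / 2
                     else 1 + R / 2 * (a - Mtot N y / gfun N d y a))"

definition F_dom :: "nat \<Rightarrow> (nat \<Rightarrow> real) \<Rightarrow> (nat \<Rightarrow> nat) \<Rightarrow> real \<Rightarrow> bool" where
  "F_dom N d y a \<longleftrightarrow> is_pole N d y a \<or> gfun N d y a \<noteq> 0"

definition g_zeros :: "nat \<Rightarrow> (nat \<Rightarrow> real) \<Rightarrow> (nat \<Rightarrow> nat) \<Rightarrow> real set" where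
  "g_zeros N d y = {a. \<not> is_pole N d y a \<and> gfun N d y a = 0}"

definition F_zeros :: "real \<Rightarrow> nat \<Rightarrow> (nat \<Rightarrow> real) \<Rightarrow> (nat \<Rightarrow> nat) \<Rightarrow> real set" where
  "F_zeros R N d y = {a. F_dom N d y a \<and> Ffun R N d y a = 0}"

definition F_inf :: "real \<Rightarrow> nat \<Rightarrow> (nat \<Rightarrow> real) \<Rightarrow> (nat \<Rightarrow> nat) \<Rightarrow> real" where
  "F_inf R N d y = 1 - R / (2 * Mtot N y) * (\<Sum>i=1..N. real (y i) / d i)"

end

theory Submission
  imports Defs "HOL-Computational_Algebra.Polynomial"
begin


lemma neg1_sq: "(-1::real)^k * (-1)^k = 1"
  by (simp flip: power_add)

lemma sign_opp: assumes "(s::real) * s = 1" "s * A < 0" "s * B > 0" shows "A * B < 0"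
proof -
  have "A * B = (s*A)*(s*B)" using assms(1) by (metis mult.assoc mult.commute mult_1_left)
  also have "\<dots> < 0" using assms(2,3) by (simp add: mult_neg_pos)
  finally show ?thesis .
qed

lemma sign_prod:
  fixes f :: "nat \<Rightarrow> real"
  assumes "finite A" "\<And>j. j \<in> A \<Longrightarrow> j \<le> r \<Longrightarrow> f j > 0" "\<And>j. j \<in> A \<Longrightarrow> r < j \<Longrightarrow> f j < 0"
  shows "(-1)^card {j\<in>A. r<j} * prod f A > 0"
proof -
  let ?B = "{j\<in>A. j \<le> r}" and ?C = "{j\<in>A. r<j}"
  have AU: "A = ?B \<union> ?C" by auto
  have "prod f A = prod f ?B * prod f ?C"
    by (subst AU, rule prod.union_disjoint) (use assms(1) in auto)
  moreover have "prod f ?B > 0" by (rule prod_pos) (use assms(2) in auto)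
  moreover have "(-1)^card ?C * prod f ?C = prod (\<lambda>j. - f j) ?C"
    by (simp add: prod.distrib[where g="\<lambda>_. -1", simplified] prod_constant flip: prod_uminus)
  moreover have "prod (\<lambda>j. - f j) ?C > 0" by (rule prod_pos) (use assms(3) in auto)
  ultimately show ?thesis by (metis mult.left_commute mult_pos_pos)
qed

lemma ivt_poly:
  fixes p :: "real poly"
  assumes "a < b" "poly p a * poly p b < 0"
  shows "\<exists>x. a < x \<and> x < b \<and> poly p x = 0"
proof (cases "poly p a < 0")
  case True
  then have "poly p b > 0" using assms(2) by (metis mult_neg_neg not_less_iff_gr_or_eq mult_zero_right order.asym)
  have c: "continuous_on {a..b} (\<lambda>x. poly p x)" by (intro continuous_intros)
  obtain x where "a \<le> x" "x \<le> b" "poly p x = 0"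
    using IVT'[of "poly p" a 0 b] True assms(1) c \<open>poly p b > 0\<close> by auto
  then show ?thesis using True \<open>poly p b > 0\<close> by (metis less_eq_real_def less_irrefl)
next
  case False
  then have a: "poly p a > 0" using assms(2) by (metis mult_zero_left not_less_iff_gr_or_eq)
  then have "poly p b < 0" using assms(2) by (metis mult_pos_pos not_less_iff_gr_or_eq mult_zero_right order.asym)
  have c: "continuous_on {a..b} (\<lambda>x. - poly p x)" by (intro continuous_intros)
  obtain x where "a \<le> x" "x \<le> b" "- poly p x = 0"
    using IVT'[of "\<lambda>x. - poly p x" a 0 b] a assms(1) c \<open>poly p b < 0\<close> by auto
  then show ?thesis using a \<open>poly p b < 0\<close> by (metis less_eq_real_def less_irrefl neg_equal_0_iff_equal)
qed

lemma count_lemma: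
  fixes X :: "'a set" and C :: "nat \<Rightarrow> 'a set"
  assumes "finite X" "card X \<le> m" "\<And>k. k < m \<Longrightarrow> C k \<subseteq> X" "\<And>k. k < m \<Longrightarrow> C k \<noteq> {}"
    "\<And>k l. k < m \<Longrightarrow> l < m \<Longrightarrow> k \<noteq> l \<Longrightarrow> C k \<inter> C l = {}"
  shows "X = (\<Union>k<m. C k) \<and> (\<forall>k<m. card (C k) = 1) \<and> card X = m"
proof -
  have fin: "\<And>k. k < m \<Longrightarrow> finite (C k)" using assms(1,3) finite_subset by blast
  have cU: "card (\<Union>k<m. C k) = (\<Sum>k<m. card (C k))"
    by (rule card_UN_disjoint) (use fin assms(5) in auto)
  have ge: "\<And>k. k < m \<Longrightarrow> card (C k) \<ge> 1" using fin assms(4) by (simp add: Suc_le_eq card_gt_0_iff)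
  have sub: "(\<Union>k<m. C k) \<subseteq> X" using assms(3) by auto
  have "card (\<Union>k<m. C k) \<le> card X" by (rule card_mono[OF assms(1) sub])
  have "(\<Sum>k<m. (1::nat)) \<le> (\<Sum>k<m. card (C k))" by (rule sum_mono) (use ge in auto)
  then have sm: "(\<Sum>k<m. card (C k)) = m" using cU \<open>card (\<Union>k<m. C k) \<le> card X\<close> assms(2) by simp
  have each: "\<forall>k<m. card (C k) = 1"
  proof (rule ccontr)
    assume "\<not> ?thesis"
    then obtain k0 where "k0 < m" "card (C k0) \<noteq> 1" by auto
    then have "card (C k0) > 1" using ge by fastforce
    then have "(\<Sum>k<m. (1::nat)) < (\<Sum>k<m. card (C k))"
      using \<open>k0 < m\<close> ge by (intro sum_strict_mono_ex1) auto
    then show False using sm by simp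
  qed
  have "card (\<Union>k<m. C k) = card X" using cU sm assms(2) \<open>card (\<Union>k<m. C k) \<le> card X\<close> by simp
  then have "(\<Union>k<m. C k) = X" using card_subset_eq[OF assms(1) sub] by simp
  then show ?thesis using each cU sm by simp
qed

lemma core:
  fixes q Y :: "nat \<Rightarrow> real" and n :: nat and R M W :: real and g F :: "real \<Rightarrow> real"
    and pole :: "real \<Rightarrow> bool" and Z FZ :: "real set"
  assumes n2: "n \<ge> 2" and qmono: "\<And>i j. i < j \<Longrightarrow> j < n \<Longrightarrow> q i < q j"
    and Ypos: "\<And>k. k < n \<Longrightarrow> Y k > 0" and Rpos: "R > 0"
    and Mdef: "M = (\<Sum>k<n. Y k)" and gdef: "\<And>a. g a = (\<Sum>k<n. Y k / (a - q k))"
    and poledef: "\<And>a. pole a \<longleftrightarrow> (\<exists>k<n. a = q k)"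
    and Fdef: "\<And>a. F a = (if pole a then 1 + a * R / 2 else 1 + R / 2 * (a - M / g a))"
    and Wdef: "W = (\<Sum>k<n. Y k * (2 / R + q k))" and W0: "W \<noteq> 0"
    and Zdef: "Z = {a. \<not> pole a \<and> g a = 0}"
    and FZdef: "FZ = {a. (pole a \<or> g a \<noteq> 0) \<and> F a = 0}"
  shows "finite FZ \<and> card FZ = n - 1
    \<and> finite Z \<and> Z \<noteq> {}
    \<and> card (FZ \<inter> {Min Z<..<Max Z}) = n - 2
    \<and> (\<forall>s\<in>Z. \<forall>t\<in>Z. s < t \<and> (\<forall>u\<in>Z. \<not> (s < u \<and> u < t))
          \<longrightarrow> card (FZ \<inter> {s<..<t}) = 1)
    \<and> (W > 0 \<longrightarrow> card (FZ \<inter> {..<Min Z}) = 1 \<and> FZ \<inter> {Max Z<..} = {})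
    \<and> (W < 0 \<longrightarrow> card (FZ \<inter> {Max Z<..}) = 1 \<and> FZ \<inter> {..<Min Z} = {})"
proof -
  define c where "c = 2 / R"
  define lin where "lin j = [:- q j, 1:]" for j
  define E where "E k = (\<Prod>j\<in>{..<n}-{k}. lin j)" for k
  define Gp where "Gp = (\<Sum>k<n. smult (Y k) (E k))"
  define Pp where "Pp = (\<Sum>k<n. smult (Y k * (c + q k)) (E k))"
  define Q where "Q a = (\<Prod>j<n. (a - q j))" for a
  have qle: "q i \<le> q j" if "i \<le> j" "j < n" for i j
    using qmono[of i j] that by (cases "i = j") auto
  have Mpos: "M > 0" unfolding Mdef using n2 by (intro sum_pos) (auto intro: Ypos simp: lessThan_empty_iff)
  have polyE: "poly (E k) a = (\<Prod>j\<in>{..<n}-{k}. (a - q j))" for k a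
    by (simp add: E_def lin_def poly_prod)
  have lin_nz: "lin j \<noteq> 0" for j by (simp add: lin_def)
  have degE: "degree (E k) = n - 1" and lcE: "lead_coeff (E k) = 1" if "k < n" for k
  proof -
    have "degree (E k) = (\<Sum>j\<in>{..<n}-{k}. degree (lin j))"
      unfolding E_def by (rule degree_prod_eq_sum_degree) (simp add: lin_nz)
    also have "\<dots> = card ({..<n}-{k})" by (simp add: lin_def)
    also have "\<dots> = n - 1" using that by simp
    finally show "degree (E k) = n - 1" .
    show "lead_coeff (E k) = 1" unfolding E_def lead_coeff_prod by (simp add: lin_def)
  qed
  have coeffE: "coeff (E k) (n - 1) = 1" if "k < n" for k using degE[OF that] lcE[OF that] by simp
  have degG: "degree Gp \<le> n - 1" unfolding Gp_def
    by (rule degree_sum_le) (auto intro: order.trans[OF degree_smult_le] simp: degE)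
  have degP: "degree Pp \<le> n - 1" unfolding Pp_def
    by (rule degree_sum_le) (auto intro: order.trans[OF degree_smult_le] simp: degE)
  have coeffE': "coeff (E k) (n - Suc 0) = 1" if "k < n" for k using coeffE[OF that] by simp
  have cG: "coeff Gp (n - 1) = M" unfolding Gp_def Mdef by (simp add: coeff_sum coeffE')
  have cP: "coeff Pp (n - 1) = W" unfolding Pp_def Wdef c_def by (simp add: coeff_sum coeffE')
  have Gnz: "Gp \<noteq> 0" using cG Mpos by auto
  have Pnz: "Pp \<noteq> 0" using cP W0 by auto
  have degP': "degree Pp = n - 1" using degP cP W0 le_degree[of Pp "n-1"] by simp
  have lcP: "lead_coeff Pp = W" using degP' cP by simp
  have Qnz: "Q a \<noteq> 0" if "\<not> pole a" for a
    using that poledef unfolding Q_def by (auto simp: prod_zero_iff)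
  have Erem: "(\<Prod>j\<in>{..<n}-{k}. (a - q j)) = Q a / (a - q k)" if "\<not> pole a" "k < n" for a k
  proof -
    have "a - q k \<noteq> 0" using that poledef by auto
    moreover have "Q a = (a - q k) * (\<Prod>j\<in>{..<n}-{k}. (a - q j))"
      unfolding Q_def using that(2) by (simp add: prod.remove)
    ultimately show ?thesis by simp
  qed
  have Gval: "poly Gp a = Q a * g a" if "\<not> pole a" for a
  proof -
    have "poly Gp a = (\<Sum>k<n. Y k * (Q a / (a - q k)))"
      unfolding Gp_def by (simp add: poly_sum polyE Erem[OF that])
    also have "\<dots> = Q a * g a" by (simp add: gdef sum_distrib_left mult.commute)
    finally show ?thesis .
  qed
  have Pval: "poly Pp a = Q a * ((a + c) * g a - M)" if "\<not> pole a" for a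
  proof -
    have "poly Pp a = (\<Sum>k<n. Y k * (c + q k) * (Q a / (a - q k)))"
      unfolding Pp_def by (simp add: poly_sum polyE Erem[OF that])
    also have "\<dots> = Q a * (\<Sum>k<n. (a + c) * (Y k / (a - q k)) - Y k)"
      unfolding sum_distrib_left
    proof (rule sum.cong)
      fix k assume "k \<in> {..<n}"
      then have "a - q k \<noteq> 0" using that poledef by auto
      then show "Y k * (c + q k) * (Q a / (a - q k)) = Q a * ((a + c) * (Y k / (a - q k)) - Y k)"
        by (simp add: field_simps)
    qed simp
    also have "\<dots> = Q a * ((a + c) * g a - M)"
      by (simp add: gdef Mdef sum_subtractf sum_distrib_left)
    finally show ?thesis .
  qed
  have Eat: "poly (E k) (q r) = 0" if "k < n" "r < n" "k \<noteq> r" for k r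
    unfolding polyE using that by (auto simp: prod_zero_iff)
  have Gpole: "poly Gp (q r) = Y r * poly (E r) (q r)" if "r < n" for r
  proof -
    have "poly Gp (q r) = (\<Sum>k<n. Y k * poly (E k) (q r))" unfolding Gp_def by (simp add: poly_sum)
    also have "\<dots> = Y r * poly (E r) (q r) + (\<Sum>k\<in>{..<n}-{r}. Y k * poly (E k) (q r))"
      using that by (simp add: sum.remove)
    also have "(\<Sum>k\<in>{..<n}-{r}. Y k * poly (E k) (q r)) = 0"
      using that by (intro sum.neutral) (auto simp: Eat)
    finally show ?thesis by simp
  qed
  have Ppole: "poly Pp (q r) = Y r * (c + q r) * poly (E r) (q r)" if "r < n" for r
  proof -
    have "poly Pp (q r) = (\<Sum>k<n. Y k * (c + q k) * poly (E k) (q r))" unfolding Pp_def by (simp add: poly_sum)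
    also have "\<dots> = Y r * (c + q r) * poly (E r) (q r) + (\<Sum>k\<in>{..<n}-{r}. Y k * (c + q k) * poly (E k) (q r))"
      using that by (simp add: sum.remove)
    also have "(\<Sum>k\<in>{..<n}-{r}. Y k * (c + q k) * poly (E k) (q r)) = 0"
      using that by (intro sum.neutral) (auto simp: Eat)
    finally show ?thesis by simp
  qed
  have cardgt: "card {j\<in>{..<n}. r < j} = n - 1 - r" if "r < n" for r
  proof -
    have "{j\<in>{..<n}. r < j} = {r<..<n}" by auto
    then show ?thesis by simp
  qed
  have cardgt2: "card {j\<in>{..<n}-{r}. r < j} = n - 1 - r" if "r < n" for r
  proof -
    have "{j\<in>{..<n}-{r}. r < j} = {r<..<n}" by auto
    then show ?thesis by simp
  qed
  have Esign: "(-1)^(n - 1 - r) * poly (E r) (q r) > 0" if "r < n" for r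
  proof -
    have "(-1)^card {j\<in>{..<n}-{r}. r < j} * (\<Prod>j\<in>{..<n}-{r}. (q r - q j)) > 0"
      by (rule sign_prod) (use qmono that in \<open>auto simp: le_less\<close>)
    then show ?thesis using cardgt2[OF that] by (simp add: polyE)
  qed
  have Qsign: "(-1)^(n - 1 - r) * Q x > 0"
    if "r < n" "\<And>j. j < n \<Longrightarrow> j \<le> r \<Longrightarrow> q j < x" "\<And>j. j < n \<Longrightarrow> r < j \<Longrightarrow> x < q j" for r x
  proof -
    have "(-1)^card {j\<in>{..<n}. r < j} * (\<Prod>j<n. (x - q j)) > 0"
      by (rule sign_prod) (use that in auto)
    then show ?thesis using cardgt[OF that(1)] by (simp add: Q_def)
  qed
  have Enz: "poly (E r) (q r) \<noteq> 0" if "r < n" for r using Esign[OF that] by auto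
  have ZG: "Z = {a. poly Gp a = 0}"
  proof (rule set_eqI)
    fix a show "a \<in> Z \<longleftrightarrow> a \<in> {a. poly Gp a = 0}"
    proof (cases "pole a")
      case True
      then obtain r where r: "r < n" "a = q r" using poledef by auto
      then have "poly Gp a \<noteq> 0" using Gpole[OF r(1)] Enz[OF r(1)] Ypos[OF r(1)] by simp
      with True show ?thesis using Zdef by auto
    next
      case False then show ?thesis using Zdef Gval[OF False] Qnz[OF False] by auto
    qed
  qed
  have finZ: "finite Z" using ZG poly_roots_finite[OF Gnz] by simp
  have cardZle: "card Z \<le> n - 1" using ZG card_poly_roots_bound[OF Gnz] degG by simp
  define A where "A r = Z \<inter> {q r<..<q (Suc r)}" for r
  have Ane: "A r \<noteq> {}" if "r < n - 1" for r
  proof -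
    define e where "e = n - 2 - r"
    have e: "n - 1 - r = Suc e" "n - 1 - Suc r = e" using that unfolding e_def by auto
    have r1: "r < n" "Suc r < n" using that by auto
    have "(-1)^(Suc e) * poly (E r) (q r) > 0" using Esign[OF r1(1)] e(1) by simp
    then have a1: "(-1)^e * poly (E r) (q r) < 0" by simp
    have eq1: "(-1)^e * poly Gp (q r) = Y r * ((-1)^e * poly (E r) (q r))"
      unfolding Gpole[OF r1(1)] by (simp only: ac_simps)
    have s1: "(-1)^e * poly Gp (q r) < 0" by (subst eq1) (rule mult_pos_neg[OF Ypos[OF r1(1)] a1])
    have a2: "(-1)^e * poly (E (Suc r)) (q (Suc r)) > 0" using Esign[OF r1(2)] e(2) by simp
    have eq2: "(-1)^e * poly Gp (q (Suc r)) = Y (Suc r) * ((-1)^e * poly (E (Suc r)) (q (Suc r)))"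
      unfolding Gpole[OF r1(2)] by (simp only: ac_simps)
    have s2: "(-1)^e * poly Gp (q (Suc r)) > 0" by (subst eq2) (rule mult_pos_pos[OF Ypos[OF r1(2)] a2])
    have pr: "poly Gp (q r) * poly Gp (q (Suc r)) < 0" by (rule sign_opp[OF neg1_sq s1 s2])
    have ql: "q r < q (Suc r)" using qmono[of r "Suc r"] r1 by simp
    obtain x where "q r < x" "x < q (Suc r)" "poly Gp x = 0"
      using ivt_poly[OF ql pr] by blast
    then have "x \<in> A r" unfolding A_def ZG by simp
    then show ?thesis by blast
  qed
  have Adisj: "A k \<inter> A l = {}" if "k < n - 1" "l < n - 1" "k \<noteq> l" for k l
  proof -
    have *: "A k \<inter> A l = {}" if "k < l" "l < n - 1" for k l
    proof -
      have ql: "q (Suc k) \<le> q l" by (rule qle) (use that in simp_all)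
      have False if "x \<in> A k" "x \<in> A l" for x
      proof -
        have "x < q (Suc k)" "q l < x" using that unfolding A_def by simp_all
        then show False using ql by linarith
      qed
      then show ?thesis by blast
    qed
    show ?thesis
    proof (cases "k < l")
      case True then show ?thesis using *[of k l] that by blast
    next
      case False then have "l < k" using that by simp
      then show ?thesis using *[of l k] that by blast
    qed
  qed
  have cntZ: "Z = (\<Union>k<n - 1. A k) \<and> (\<forall>k<n - 1. card (A k) = 1) \<and> card Z = n - 1"
    by (rule count_lemma[OF finZ cardZle]) (use A_def Ane Adisj in auto)
  define z where "z r = the_elem (A r)" for r
  have Az: "A r = {z r}" if "r < n - 1" for r
  proof -
    have "card (A r) = 1" using cntZ that by auto
    then obtain x where "A r = {x}" by (rule card_1_singletonE)
    then show ?thesis by (simp add: z_def)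
  qed
  have zZ: "z r \<in> Z" and zlo: "q r < z r" and zhi: "z r < q (Suc r)" if "r < n - 1" for r
    using Az[OF that] unfolding A_def by auto
  have zmono: "z r < z l" if "r < l" "l < n - 1" for r l
  proof -
    have "q (Suc r) \<le> q l" using qle[of "Suc r" l] that by auto
    then show ?thesis using zhi[of r] zlo[of l] that by auto
  qed
  have zle: "z r \<le> z l" if "r \<le> l" "l < n - 1" for r l
    using zmono[of r l] that by (cases "r = l") auto
  have Zimg: "Z = z ` {..<n - 1}" using cntZ Az by auto
  have MinZ: "Min Z = z 0"
    by (rule Min_eqI[OF finZ]) (use Zimg zle n2 in auto)
  have MaxZ: "Max Z = z (n - 2)"
    by (rule Max_eqI[OF finZ]) (use Zimg zle n2 in auto)
  have Znp: "\<not> pole a" "g a = 0" if "a \<in> Z" for a using that Zdef by auto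
  have Psz: "(-1)^(n - 1 - r) * poly Pp (z r) < 0" if "r < n - 1" for r
  proof -
    have rn: "r < n" using that by simp
    have zl: "q r < z r" and zh: "z r < q (Suc r)" using zlo[OF that] zhi[OF that] by auto
    have "(-1)^(n - 1 - r) * Q (z r) > 0"
    proof (rule Qsign[OF rn])
      show "q j < z r" if "j < n" "j \<le> r" for j using qle[of j r] that rn zl by simp
      show "z r < q j" if "j < n" "r < j" for j using qle[of "Suc r" j] that zh by simp
    qed
    moreover have "poly Pp (z r) = - M * Q (z r)"
      using Pval[OF Znp(1)[OF zZ[OF that]]] Znp(2)[OF zZ[OF that]] by simp
    ultimately show ?thesis using Mpos by (simp add: mult.left_commute mult_pos_pos)
  qed
  have FP: "FZ = {a. poly Pp a = 0}"
  proof (rule set_eqI)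
    fix a
    show "a \<in> FZ \<longleftrightarrow> a \<in> {a. poly Pp a = 0}"
    proof (cases "pole a")
      case True
      then obtain r where r: "r < n" "a = q r" using poledef by blast
      have eq: "1 + a * R / 2 = (R / 2) * (c + a)" using Rpos by (simp add: c_def field_simps)
      have "a \<in> FZ \<longleftrightarrow> 1 + a * R / 2 = 0" using True by (simp add: FZdef Fdef)
      also have "\<dots> \<longleftrightarrow> c + a = 0" unfolding eq using Rpos by simp
      also have "\<dots> \<longleftrightarrow> poly Pp a = 0"
        using Ppole[OF r(1)] r(2) Ypos[OF r(1)] Enz[OF r(1)] by simp
      finally show ?thesis by simp
    next
      case False
      have Qa: "Q a \<noteq> 0" by (rule Qnz[OF False])
      show ?thesis
      proof (cases "g a = 0")
        case True
        then have "poly Pp a \<noteq> 0" using Pval[OF False] Qa Mpos by simp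
        moreover have "a \<notin> FZ" using False True by (simp add: FZdef)
        ultimately show ?thesis by simp
      next
        case g: False
        have eq: "1 + R / 2 * (a - M / g a) = (R / (2 * g a)) * ((a + c) * g a - M)"
          using g Rpos by (simp add: c_def field_simps)
        have "a \<in> FZ \<longleftrightarrow> 1 + R / 2 * (a - M / g a) = 0" using False g by (simp add: FZdef Fdef)
        also have "\<dots> \<longleftrightarrow> (a + c) * g a - M = 0" unfolding eq using g Rpos by simp
        also have "\<dots> \<longleftrightarrow> poly Pp a = 0" using Pval[OF False] Qa by simp
        finally show ?thesis by simp
      qed
    qed
  qed
  have finFZ: "finite FZ" using FP poly_roots_finite[OF Pnz] by simp
  have cardFZle: "card FZ \<le> n - 1" using FP card_poly_roots_bound[OF Pnz] degP by simp
  have ZnFZ: "a \<notin> FZ" if "a \<in> Z" for a using Znp[OF that] by (simp add: FZdef)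
  have mid: "FZ \<inter> {z r<..<z (Suc r)} \<noteq> {}" if "r < n - 2" for r
  proof -
    have r1: "r < n - 1" "Suc r < n - 1" using that by auto
    define e where "e = n - 1 - Suc r"
    have e: "n - 1 - r = Suc e" using that unfolding e_def by auto
    have "(-1)^(Suc e) * poly Pp (z r) < 0" using Psz[OF r1(1)] e by simp
    then have b1: "(-1)^e * poly Pp (z r) > 0" by simp
    have b2: "(-1)^e * poly Pp (z (Suc r)) < 0" using Psz[OF r1(2)] unfolding e_def .
    have "poly Pp (z (Suc r)) * poly Pp (z r) < 0" by (rule sign_opp[OF neg1_sq b2 b1])
    then have pr: "poly Pp (z r) * poly Pp (z (Suc r)) < 0" by (simp only: mult.commute)
    have zl: "z r < z (Suc r)" using zmono[of r "Suc r"] r1 by simp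
    obtain x where "z r < x" "x < z (Suc r)" "poly Pp x = 0" using ivt_poly[OF zl pr] by blast
    then have "x \<in> FZ \<inter> {z r<..<z (Suc r)}" unfolding FP by simp
    then show ?thesis by blast
  qed
  have leftT: "FZ \<inter> {..<z 0} \<noteq> {}" if Wp: "W > 0"
  proof -
    define h where "h = smult ((-1)^(n - 1)) (pcompose Pp [:0, -1:])"
    have "lead_coeff h = (-1)^(n - 1) * (W * (-1)^(n - 1))"
      unfolding h_def lead_coeff_smult by (subst lead_coeff_comp) (simp_all add: lcP degP' cP[simplified])
    also have "\<dots> = W * ((-1)^(n - 1) * (-1)^(n - 1))" by (simp only: ac_simps)
    finally have lh: "lead_coeff h = W" by (simp only: neg1_sq mult_1_right)
    obtain m where m: "\<forall>x\<ge>m. poly h x \<ge> lead_coeff h" using poly_pinfty_gt_lc[of h] lh Wp by auto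
    define x0 where "x0 = max m (1 - z 0)"
    have "poly h x0 \<ge> W" using m lh unfolding x0_def by auto
    then have b1: "(-1)^(n - 1) * poly Pp (- x0) > 0" using Wp by (simp add: h_def poly_pcompose)
    have n0: "0 < n - 1" using n2 by simp
    have b2: "(-1)^(n - 1) * poly Pp (z 0) < 0" using Psz[OF n0] by simp
    have "poly Pp (z 0) * poly Pp (- x0) < 0" by (rule sign_opp[OF neg1_sq b2 b1])
    then have pr: "poly Pp (- x0) * poly Pp (z 0) < 0" by (simp only: mult.commute)
    have tl: "- x0 < z 0" unfolding x0_def by simp
    obtain x where "- x0 < x" "x < z 0" "poly Pp x = 0" using ivt_poly[OF tl pr] by blast
    then have "x \<in> FZ \<inter> {..<z 0}" unfolding FP by simp
    then show ?thesis by blast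
  qed
  have rightT: "FZ \<inter> {z (n - 2)<..} \<noteq> {}" if Wn: "W < 0"
  proof -
    define h where "h = - Pp"
    have lh: "lead_coeff h = - W" unfolding h_def lead_coeff_minus lcP ..
    obtain m where m: "\<forall>x\<ge>m. poly h x \<ge> lead_coeff h" using poly_pinfty_gt_lc[of h] lh Wn by auto
    define x0 where "x0 = max m (z (n - 2) + 1)"
    have "poly h x0 \<ge> - W" using m lh unfolding x0_def by auto
    then have b1: "poly Pp x0 < 0" using Wn by (simp add: h_def)
    have n0: "n - 2 < n - 1" using n2 by simp
    have nn: "n - 1 - (n - 2) = 1" using n2 by simp
    have "(-1)^(n - 1 - (n - 2)) * poly Pp (z (n - 2)) < 0" by (rule Psz[OF n0])
    then have b2: "poly Pp (z (n - 2)) > 0" unfolding nn by simp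
    have pr: "poly Pp (z (n - 2)) * poly Pp x0 < 0" using b1 b2 by (simp add: mult_pos_neg)
    have tl: "z (n - 2) < x0" unfolding x0_def by simp
    obtain x where "z (n - 2) < x" "x < x0" "poly Pp x = 0" using ivt_poly[OF tl pr] by blast
    then have "x \<in> FZ \<inter> {z (n - 2)<..}" unfolding FP by simp
    then show ?thesis by blast
  qed
  have n0: "0 < n - 1" and nm: "n - 2 < n - 1" using n2 by auto
  have FZsub: "x \<in> FZ \<Longrightarrow> x \<in> {a. poly Pp a = 0}" for x using FP by simp
  have key: "card FZ = n - 1 \<and> (\<forall>k<n - 2. card (FZ \<inter> {z k<..<z (Suc k)}) = 1)
     \<and> (W > 0 \<longrightarrow> card (FZ \<inter> {..<z 0}) = 1 \<and> FZ \<inter> {z (n - 2)<..} = {})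
     \<and> (W < 0 \<longrightarrow> card (FZ \<inter> {z (n - 2)<..}) = 1 \<and> FZ \<inter> {..<z 0} = {})"
  proof (cases "W > 0")
    case True
    define C where "C k = (if k = 0 then FZ \<inter> {..<z 0} else FZ \<inter> {z (k - 1)<..<z k})" for k
    have Cprop: "x < z k" "0 < k \<Longrightarrow> z (k - 1) < x" if "x \<in> C k" for x k
      using that unfolding C_def by (cases "k = 0"; simp)+
    have Cne: "C k \<noteq> {}" if "k < n - 1" for k
    proof (cases k)
      case 0 then show ?thesis using leftT[OF True] by (simp add: C_def)
    next
      case (Suc j)
      then have "j < n - 2" using that by simp
      then show ?thesis using mid[of j] Suc by (simp add: C_def)
    qed
    have Cdisj: "C k \<inter> C l = {}" if "k < n - 1" "l < n - 1" "k \<noteq> l" for k l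
    proof -
      have *: "C k \<inter> C l = {}" if "k < l" "l < n - 1" for k l
      proof -
        have zz: "z k \<le> z (l - 1)" by (rule zle) (use that in simp_all)
        have False if "x \<in> C k" "x \<in> C l" for x
        proof -
          have "x < z k" by (rule Cprop(1)[OF that(1)])
          moreover have "z (l - 1) < x" by (rule Cprop(2)[OF that(2)]) (use \<open>k < l\<close> in simp)
          ultimately show False using zz by linarith
        qed
        then show ?thesis by blast
      qed
      show ?thesis
      proof (cases "k < l")
        case True then show ?thesis using *[of k l] that by blast
      next
        case False then have "l < k" using that by simp
        then show ?thesis using *[of l k] that by blast
      qed
    qed
    have CFZ: "C k \<subseteq> FZ" for k unfolding C_def by auto
    have cnt: "FZ = (\<Union>k<n - 1. C k) \<and> (\<forall>k<n - 1. card (C k) = 1) \<and> card FZ = n - 1"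
      by (rule count_lemma[OF finFZ cardFZle]) (use CFZ Cne Cdisj in simp_all)
    have r1: "\<forall>k<n - 2. card (FZ \<inter> {z k<..<z (Suc k)}) = 1"
    proof (intro allI impI)
      fix k assume "k < n - 2"
      then have "Suc k < n - 1" by simp
      then have "card (C (Suc k)) = 1" using cnt by blast
      then show "card (FZ \<inter> {z k<..<z (Suc k)}) = 1" by (simp add: C_def)
    qed
    have r2: "card (FZ \<inter> {..<z 0}) = 1"
    proof -
      have "card (C 0) = 1" using cnt n0 by blast
      then show ?thesis by (simp add: C_def)
    qed
    have r3: "FZ \<inter> {z (n - 2)<..} = {}"
    proof -
      have False if xF: "x \<in> FZ" and xz: "z (n - 2) < x" for x
      proof -
        have "FZ = (\<Union>k<n - 1. C k)" using cnt by simp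
        with xF have "x \<in> (\<Union>k<n - 1. C k)" by simp
        then obtain k where k: "k < n - 1" "x \<in> C k" by blast
        have "z k \<le> z (n - 2)" by (rule zle) (use k(1) in simp_all)
        then show False using Cprop(1)[OF k(2)] xz by linarith
      qed
      then show ?thesis by blast
    qed
    have c1: "card FZ = n - 1" using cnt by blast
    show ?thesis using c1 r1 r2 r3 True by simp
  next
    case False
    then have Wn: "W < 0" using W0 by simp
    define C where "C k = (if k = n - 2 then FZ \<inter> {z (n - 2)<..} else FZ \<inter> {z k<..<z (Suc k)})" for k
    have Cprop: "z k < x" "k \<noteq> n - 2 \<Longrightarrow> x < z (Suc k)" if "x \<in> C k" for x k
      using that unfolding C_def by (cases "k = n - 2"; simp)+
    have Cne: "C k \<noteq> {}" if "k < n - 1" for k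
    proof (cases "k = n - 2")
      case True then show ?thesis using rightT[OF Wn] by (simp add: C_def)
    next
      case False
      then have "k < n - 2" using that by simp
      then show ?thesis using mid[of k] False by (simp add: C_def)
    qed
    have Cdisj: "C k \<inter> C l = {}" if "k < n - 1" "l < n - 1" "k \<noteq> l" for k l
    proof -
      have *: "C k \<inter> C l = {}" if "k < l" "l < n - 1" for k l
      proof -
        have zz: "z (Suc k) \<le> z l" by (rule zle) (use that in simp_all)
        have kn: "k \<noteq> n - 2" using that by simp
        have False if "x \<in> C k" "x \<in> C l" for x
        proof -
          have "x < z (Suc k)" by (rule Cprop(2)[OF that(1) kn])
          moreover have "z l < x" by (rule Cprop(1)[OF that(2)])
          ultimately show False using zz by linarith
        qed
        then show ?thesis by blast
      qed
      show ?thesis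
      proof (cases "k < l")
        case True then show ?thesis using *[of k l] that by blast
      next
        case False then have "l < k" using that by simp
        then show ?thesis using *[of l k] that by blast
      qed
    qed
    have CFZ: "C k \<subseteq> FZ" for k unfolding C_def by auto
    have cnt: "FZ = (\<Union>k<n - 1. C k) \<and> (\<forall>k<n - 1. card (C k) = 1) \<and> card FZ = n - 1"
      by (rule count_lemma[OF finFZ cardFZle]) (use CFZ Cne Cdisj in simp_all)
    have r1: "\<forall>k<n - 2. card (FZ \<inter> {z k<..<z (Suc k)}) = 1"
    proof (intro allI impI)
      fix k assume k: "k < n - 2"
      then have "k < n - 1" by simp
      then have "card (C k) = 1" using cnt by blast
      then show "card (FZ \<inter> {z k<..<z (Suc k)}) = 1" using k by (simp add: C_def)
    qed
    have r2: "card (FZ \<inter> {z (n - 2)<..}) = 1"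
    proof -
      have "card (C (n - 2)) = 1" using cnt nm by blast
      then show ?thesis by (simp add: C_def)
    qed
    have r3: "FZ \<inter> {..<z 0} = {}"
    proof -
      have False if xF: "x \<in> FZ" and xz: "x < z 0" for x
      proof -
        have "FZ = (\<Union>k<n - 1. C k)" using cnt by simp
        with xF have "x \<in> (\<Union>k<n - 1. C k)" by simp
        then obtain k where k: "k < n - 1" "x \<in> C k" by blast
        have "z 0 \<le> z k" by (rule zle) (use k(1) in simp_all)
        then show False using Cprop(1)[OF k(2)] xz by linarith
      qed
      then show ?thesis by blast
    qed
    have c1: "card FZ = n - 1" using cnt by blast
    show ?thesis using c1 r1 r2 r3 Wn by simp
  qed
  define L where "L = FZ \<inter> {..<z 0}"
  define Mi where "Mi = FZ \<inter> {z 0<..<z (n - 2)}"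
  define Rt where "Rt = FZ \<inter> {z (n - 2)<..}"
  have z0Z: "z 0 \<in> Z" and zmZ: "z (n - 2) \<in> Z" using zZ[OF n0] zZ[OF nm] by auto
  have z0m: "z 0 \<le> z (n - 2)" by (rule zle) (use nm in simp_all)
  have FZU: "FZ = L \<union> Mi \<union> Rt"
  proof (rule set_eqI)
    fix x
    show "x \<in> FZ \<longleftrightarrow> x \<in> L \<union> Mi \<union> Rt"
    proof
      assume x: "x \<in> FZ"
      then have "x \<noteq> z 0" "x \<noteq> z (n - 2)" using ZnFZ z0Z zmZ by auto
      then show "x \<in> L \<union> Mi \<union> Rt" using x unfolding L_def Mi_def Rt_def by auto
    qed (auto simp: L_def Mi_def Rt_def)
  qed
  have fins: "finite L" "finite Mi" "finite Rt" using finFZ unfolding L_def Mi_def Rt_def by auto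
  have d1: "L \<inter> Mi = {}" unfolding L_def Mi_def by auto
  have d2: "(L \<union> Mi) \<inter> Rt = {}" using z0m unfolding L_def Mi_def Rt_def by auto
  have "card FZ = card L + card Mi + card Rt"
    unfolding FZU using fins d1 d2 by (simp add: card_Un_disjoint)
  moreover have "card L + card Rt = 1"
  proof (cases "W > 0")
    case True then show ?thesis using key unfolding L_def Rt_def by simp
  next
    case False then have "W < 0" using W0 by simp
    then show ?thesis using key unfolding L_def Rt_def by simp
  qed
  ultimately have cMi: "card Mi = n - 2" using key by simp
  have consec: "card (FZ \<inter> {s<..<t}) = 1"
    if st: "s \<in> Z" "t \<in> Z" "s < t" "\<forall>u\<in>Z. \<not> (s < u \<and> u < t)" for s t
  proof -
    obtain k where k: "k < n - 1" "s = z k" using st(1) Zimg by auto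
    obtain l where l: "l < n - 1" "t = z l" using st(2) Zimg by auto
    have kl: "k < l"
    proof (rule ccontr)
      assume "\<not> k < l"
      then have "z l \<le> z k" using zle[of l k] k(1) by simp
      then show False using st(3) k l by simp
    qed
    have lk: "l = Suc k"
    proof (rule ccontr)
      assume "l \<noteq> Suc k"
      then have "Suc k < l" using kl by simp
      then have "s < z (Suc k)" "z (Suc k) < t" using zmono[of k "Suc k"] zmono[of "Suc k" l] k l by auto
      moreover have "z (Suc k) \<in> Z" using zZ[of "Suc k"] \<open>Suc k < l\<close> l(1) by simp
      ultimately show False using st(4) by blast
    qed
    have "k < n - 2" using lk l(1) by simp
    then show ?thesis using key k(2) l(2) lk by simp
  qed
  show ?thesis
    using key cMi consec finFZ finZ z0Z MinZ MaxZ unfolding Mi_def by auto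
qed


lemma term_eq: "(d::real) \<noteq> 0 \<Longrightarrow> y * d / (1 + a * d) = y / (a - (- 1 / d))"
proof (cases "1 + a * d = 0")
  case True
  assume d: "d \<noteq> 0"
  then have "a - (- 1 / d) = 0" using True by (simp add: field_simps)
  then show ?thesis using True by simp
next
  case False
  assume d: "d \<noteq> 0"
  have "a - (- 1 / d) = (1 + a * d) / d" using d by (simp add: field_simps)
  then show ?thesis using False d by simp
qed

theorem mainTheorem6:
  fixes N :: nat and xA xB :: real and dx x :: "nat \<Rightarrow> real" and y :: "nat \<Rightarrow> nat"
  defines "R \<equiv> xB - xA"
  defines "d \<equiv> (\<lambda>i. x i - xA)"
  defines "Z \<equiv> g_zeros N d y"
  defines "FZ \<equiv> F_zeros R N d y"
  assumes hN: "N \<ge> 2"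
    and hAB: "xA < xB"
    and hdx: "\<forall>i\<in>{1..N}. dx i > 0"
    and htile_sum: "(\<Sum>i=1..N. dx i) = R"
    and hcentres: "\<forall>i\<in>{1..N}. x i = xA + (\<Sum>j=1..<i. dx j) + dx i / 2"
    and hn: "ncount N y \<ge> 2"
    and hFinf: "F_inf R N d y \<noteq> 0"
  shows "finite FZ \<and> card FZ = ncount N y - 1
    \<and> finite Z \<and> Z \<noteq> {}
    \<and> card (FZ \<inter> {Min Z<..<Max Z}) = ncount N y - 2
    \<and> (\<forall>s\<in>Z. \<forall>t\<in>Z. s < t \<and> (\<forall>u\<in>Z. \<not> (s < u \<and> u < t))
          \<longrightarrow> card (FZ \<inter> {s<..<t}) = 1)
    \<and> (F_inf R N d y > 0 \<longrightarrow> card (FZ \<inter> {..<Min Z}) = 1 \<and> FZ \<inter> {Max Z<..} = {})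
    \<and> (F_inf R N d y < 0 \<longrightarrow> card (FZ \<inter> {Max Z<..}) = 1 \<and> FZ \<inter> {..<Min Z} = {})"
proof -
  have hdx': "dx j > 0" if "j \<in> {1..N}" for j using hdx that by blast
  have Rpos: "R > 0" using hAB unfolding R_def by simp
  have dval: "d i = (\<Sum>j=1..<i. dx j) + dx i / 2" if "i \<in> {1..N}" for i
    using hcentres that unfolding d_def by simp
  have dpos: "d i > 0" if "i \<in> {1..N}" for i
  proof -
    have "(\<Sum>j=1..<i. dx j) \<ge> 0" using that by (intro sum_nonneg) (auto intro!: less_imp_le[OF hdx'])
    moreover have "dx i > 0" using hdx'[OF that] .
    ultimately show ?thesis using dval[OF that] by simp
  qed
  have dmono: "d i < d i'" if "i \<in> {1..N}" "i' \<in> {1..N}" "i < i'" for i i'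
  proof -
    have "(\<Sum>j=1..<i'. dx j) = (\<Sum>j=1..<i. dx j) + (\<Sum>j=i..<i'. dx j)"
      using that by (simp add: sum.atLeastLessThan_concat)
    moreover have "(\<Sum>j=i..<i'. dx j) = dx i + (\<Sum>j=Suc i..<i'. dx j)"
      using that by (simp add: sum.atLeast_Suc_lessThan)
    moreover have "(\<Sum>j=Suc i..<i'. dx j) \<ge> 0" using that by (intro sum_nonneg) (auto intro!: less_imp_le[OF hdx'])
    moreover have "dx i > 0" "dx i' > 0" using hdx'[OF that(1)] hdx'[OF that(2)] by auto
    ultimately show ?thesis using dval[OF that(1)] dval[OF that(2)] by simp
  qed
  define S where "S = {i\<in>{1..N}. y i \<ge> 1}"
  define n where "n = card S"
  have finS: "finite S" unfolding S_def by simp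
  have nc: "ncount N y = n" unfolding n_def S_def ncount_def ..
  define L where "L = sorted_list_of_set S"
  define \<sigma> where "\<sigma> k = L ! k" for k
  have lenL: "length L = n" unfolding L_def n_def by simp
  have setL: "set L = S" unfolding L_def using finS by simp
  have distL: "distinct L" unfolding L_def by simp
  have sortL: "sorted_wrt (<) L" unfolding L_def by (rule strict_sorted_list_of_set)
  have bij: "bij_betw \<sigma> {..<n} S"
    unfolding \<sigma>_def[abs_def] by (rule bij_betw_nth[OF distL]) (simp_all add: lenL setL)
  have \<sigma>S: "\<sigma> k \<in> S" if "k < n" for k using bij that by (auto simp: bij_betw_def)
  have \<sigma>mono: "\<sigma> i < \<sigma> j" if "i < j" "j < n" for i j
    unfolding \<sigma>_def using sorted_wrt_nth_less[OF sortL that(1)] that(2) lenL by simp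
  have reidx: "(\<Sum>i\<in>{1..N}. f i) = (\<Sum>k<n. f (\<sigma> k))"
    if f0: "\<And>i. i \<in> {1..N} \<Longrightarrow> y i = 0 \<Longrightarrow> f i = 0" for f :: "nat \<Rightarrow> real"
  proof -
    have "(\<Sum>i\<in>{1..N}. f i) = (\<Sum>i\<in>S. f i)"
      by (rule sum.mono_neutral_right) (auto simp: S_def intro: f0)
    also have "\<dots> = (\<Sum>k<n. f (\<sigma> k))"
      by (rule sum.reindex_bij_betw[symmetric, OF bij])
    finally show ?thesis .
  qed
  define q where "q k = - 1 / d (\<sigma> k)" for k
  define Y where "Y k = real (y (\<sigma> k))" for k
  define M where "M = Mtot N y"
  have SN: "i \<in> {1..N}" if "i \<in> S" for i using that unfolding S_def by simp
  have qmono: "q i < q j" if "i < j" "j < n" for i j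
  proof -
    have a: "d (\<sigma> i) < d (\<sigma> j)" using dmono[OF SN[OF \<sigma>S] SN[OF \<sigma>S] \<sigma>mono[OF that]] that by simp
    have b: "d (\<sigma> i) > 0" using dpos[OF SN[OF \<sigma>S]] that by simp
    then show ?thesis unfolding q_def using a by (simp add: field_simps)
  qed
  have Ypos: "Y k > 0" if "k < n" for k using \<sigma>S[OF that] unfolding Y_def S_def by simp
  have Mdef: "M = (\<Sum>k<n. Y k)" unfolding M_def Mtot_def Y_def by (rule reidx) simp
  have gdef: "gfun N d y a = (\<Sum>k<n. Y k / (a - q k))" for a
  proof -
    have "gfun N d y a = (\<Sum>k<n. real (y (\<sigma> k)) * d (\<sigma> k) / (1 + a * d (\<sigma> k)))"
      unfolding gfun_def by (rule reidx) simp
    also have "\<dots> = (\<Sum>k<n. Y k / (a - q k))"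
    proof (rule sum.cong)
      fix k assume "k \<in> {..<n}"
      then have "d (\<sigma> k) \<noteq> 0" using dpos[OF SN[OF \<sigma>S]] by force
      then show "real (y (\<sigma> k)) * d (\<sigma> k) / (1 + a * d (\<sigma> k)) = Y k / (a - q k)"
        unfolding Y_def q_def by (rule term_eq)
    qed simp
    finally show ?thesis .
  qed
  have poledef: "is_pole N d y a \<longleftrightarrow> (\<exists>k<n. a = q k)" for a
  proof
    assume "is_pole N d y a"
    then obtain i where i: "i \<in> S" "a = - 1 / d i" unfolding is_pole_def S_def by auto
    obtain k where "k < n" "\<sigma> k = i" using bij i(1) by (auto simp: bij_betw_def)
    then show "\<exists>k<n. a = q k" using i unfolding q_def by auto
  next
    assume "\<exists>k<n. a = q k"
    then obtain k where "k < n" "a = q k" by blast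
    then show "is_pole N d y a" using \<sigma>S[of k] unfolding is_pole_def q_def S_def by auto
  qed
  define W where "W = (\<Sum>k<n. Y k * (2 / R + q k))"
  have Mpos: "M > 0" unfolding Mdef using hn nc by (intro sum_pos) (auto intro: Ypos simp: lessThan_empty_iff)
  have Finf: "F_inf R N d y = R / (2 * M) * W"
  proof -
    have s1: "(\<Sum>i=1..N. real (y i) / d i) = (\<Sum>k<n. - (Y k * q k))"
    proof -
      have "(\<Sum>i=1..N. real (y i) / d i) = (\<Sum>k<n. real (y (\<sigma> k)) / d (\<sigma> k))"
        by (rule reidx) simp
      also have "\<dots> = (\<Sum>k<n. - (Y k * q k))" unfolding Y_def q_def by simp
      finally show ?thesis .
    qed
    have s2: "W = 2 / R * M + (\<Sum>k<n. Y k * q k)"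
      unfolding W_def Mdef by (simp add: distrib_left sum.distrib sum_distrib_left sum_divide_distrib mult.commute)
    show ?thesis unfolding F_inf_def M_def[symmetric] s1 s2 sum_negf
      using Rpos Mpos by (simp add: field_simps)
  qed
  have W0: "W \<noteq> 0" using hFinf Finf by simp
  have sgn: "F_inf R N d y > 0 \<longleftrightarrow> W > 0" "F_inf R N d y < 0 \<longleftrightarrow> W < 0"
  proof -
    have pos: "R / (2 * M) > 0" using Rpos Mpos by simp
    show "F_inf R N d y > 0 \<longleftrightarrow> W > 0" unfolding Finf
      using mult_less_cancel_left_pos[OF pos, of 0 W] by simp
    show "F_inf R N d y < 0 \<longleftrightarrow> W < 0" unfolding Finf
      using mult_less_cancel_left_pos[OF pos, of W 0] by simp
  qed
  have n2: "n \<ge> 2" using hn nc by simp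
  have C: "finite FZ \<and> card FZ = n - 1
    \<and> finite Z \<and> Z \<noteq> {}
    \<and> card (FZ \<inter> {Min Z<..<Max Z}) = n - 2
    \<and> (\<forall>s\<in>Z. \<forall>t\<in>Z. s < t \<and> (\<forall>u\<in>Z. \<not> (s < u \<and> u < t))
          \<longrightarrow> card (FZ \<inter> {s<..<t}) = 1)
    \<and> (W > 0 \<longrightarrow> card (FZ \<inter> {..<Min Z}) = 1 \<and> FZ \<inter> {Max Z<..} = {})
    \<and> (W < 0 \<longrightarrow> card (FZ \<inter> {Max Z<..}) = 1 \<and> FZ \<inter> {..<Min Z} = {})"
  proof (rule core[OF n2 qmono Ypos Rpos Mdef gdef poledef _ W_def W0])
    show "Ffun R N d y a = (if is_pole N d y a then 1 + a * R / 2 else 1 + R / 2 * (a - M / gfun N d y a))" for a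
      unfolding Ffun_def M_def ..
    show "Z = {a. \<not> is_pole N d y a \<and> gfun N d y a = 0}" unfolding Z_def g_zeros_def ..
    show "FZ = {a. (is_pole N d y a \<or> gfun N d y a \<noteq> 0) \<and> Ffun R N d y a = 0}"
      unfolding FZ_def F_zeros_def F_dom_def ..
  qed
  show ?thesis unfolding nc sgn using C by blast
qed


end
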